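(* For every formula $\varphi$ of $\mathcal L^{\bigcirc}_\square$: $\varphi$ is derivable in $\mathbf{GLC}$ if and only if $\varphi$ is valid on every finite dynamic $\mathbf{GL}$ frame.
   Context: Fix a non-empty set $\mathsf{PV}$ of propositional variables. The language $\mathcal L^{\bigcirc}_\square$ is given by $\varphi::= p\mid \varphi\wedge\varphi\mid\neg\varphi\mid\square\varphi\mid\bigcirc\varphi$ with $p\in\mathsf{PV}$. Axioms and rules: Taut; K: $\square(\varphi\to\psi)\to(\square\varphi\to\square\psi)$; 4: $\square\varphi\to\square\square\varphi$; L: $\square(\square\varphi\to\varphi)\to\square\varphi$; ${\rm Next}_\neg$: $\neg\bigcirc\varphi\leftrightarrow\bigcirc\neg\varphi$; ${\rm Next}_\wedge$: $\bigcirc(\varphi\wedge\psi)\leftrightarrow\bigcirc\varphi\wedge\bigcirc\psi$; C: $\bigcirc\varphi\wedge\bigcirc\square\varphi\to\square\bigcirc\varphi$; rules modus ponens, ${\rm Nec}_\square$, ${\rm Nec}_\bigcirc$. $\mathbf{GLC}$ is axiomatised by Taut, K, 4, L, ${\rm Next}_\neg$, ${\rm Next}_\wedge$, C and closed under these rules. A dynamic Kripke frame is $\langle W,\sqsubset,f\rangle$ with $W$ non-empty, $\sqsubset$ a binary relation on $W$ and $f\colon W\to W$ weakly monotone: $w\sqsubset v$ implies $f(w)=f(v)$ or $f(w)\sqsubset f(v)$. It is a dynamic $\mathbf{GL}$ frame if $\sqsubset$ is transitive and converse well-founded (for finite $W$: transitive and irreflexive). Truth under a valuation: $w\models\square\varphi$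 iff $v\models\varphi$ for all $v$ with $w\sqsubset v$; $w\models\bigcirc\varphi$ iff $f(w)\models\varphi$; other clauses standard. Valid on a frame means true at all points under all valuations. *)

theory Defs
  imports Main
begin

datatype 'v fm = Var 'v | And "'v fm" "'v fm" | Neg "'v fm" | Box "'v fm" | Next "'v fm"

definition Or :: "'v fm \<Rightarrow> 'v fm \<Rightarrow> 'v fm" where
  "Or a b = Neg (And (Neg a) (Neg b))"
definition Imp :: "'v fm \<Rightarrow> 'v fm \<Rightarrow> 'v fm" where
  "Imp a b = Neg (And a (Neg b))"
definition Iff :: "'v fm \<Rightarrow> 'v fm \<Rightarrow> 'v fm" where
  "Iff a b = And (Imp a b) (Imp b a)"

fun peval :: "('v fm \<Rightarrow> bool) \<Rightarrow> 'v fm \<Rightarrow> bool" where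
  "peval g (Var p) = g (Var p)"
| "peval g (And a b) = (peval g a \<and> peval g b)"
| "peval g (Neg a) = (\<not> peval g a)"
| "peval g (Box a) = g (Box a)"
| "peval g (Next a) = g (Next a)"

definition taut :: "'v fm \<Rightarrow> bool" where
  "taut \<phi> = (\<forall>g. peval g \<phi>)"

inductive GLC :: "'v fm \<Rightarrow> bool" where
  Taut: "taut \<phi> \<Longrightarrow> GLC \<phi>"
| K: "GLC (Imp (Box (Imp \<phi> \<psi>)) (Imp (Box \<phi>) (Box \<psi>)))"
| Four: "GLC (Imp (Box \<phi>) (Box (Box \<phi>)))"
| L: "GLC (Imp (Box (Imp (Box \<phi>) \<phi>)) (Box \<phi>))"
| NextNeg: "GLC (Iff (Neg (Next \<phi>)) (Next (Neg \<phi>)))"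
| NextAnd: "GLC (Iff (Next (And \<phi> \<psi>)) (And (Next \<phi>) (Next \<psi>)))"
| C: "GLC (Imp (And (Next \<phi>) (Next (Box \<phi>))) (Box (Next \<phi>)))"
| MP: "GLC (Imp \<phi> \<psi>) \<Longrightarrow> GLC \<phi> \<Longrightarrow> GLC \<psi>"
| NecBox: "GLC \<phi> \<Longrightarrow> GLC (Box \<phi>)"
| NecNext: "GLC \<phi> \<Longrightarrow> GLC (Next \<phi>)"

definition dynamic_frame :: "'w set \<Rightarrow> ('w \<Rightarrow> 'w \<Rightarrow> bool) \<Rightarrow> ('w \<Rightarrow> 'w) \<Rightarrow> bool" where
  "dynamic_frame W R f \<longleftrightarrow> W \<noteq> {} \<and>
     (\<forall>w\<in>W. f w \<in> W) \<and>
     (\<forall>w\<in>W. \<forall>v\<in>W. R w v \<longrightarrow> f w = f v \<or> R (f w) (f v))"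

definition finite_dynamic_GL_frame :: "'w set \<Rightarrow> ('w \<Rightarrow> 'w \<Rightarrow> bool) \<Rightarrow> ('w \<Rightarrow> 'w) \<Rightarrow> bool" where
  "finite_dynamic_GL_frame W R f \<longleftrightarrow> dynamic_frame W R f \<and> finite W \<and>
     (\<forall>u\<in>W. \<forall>v\<in>W. \<forall>w\<in>W. R u v \<longrightarrow> R v w \<longrightarrow> R u w) \<and> (\<forall>w\<in>W. \<not> R w w)"

fun sat :: "'w set \<Rightarrow> ('w \<Rightarrow> 'w \<Rightarrow> bool) \<Rightarrow> ('w \<Rightarrow> 'w) \<Rightarrow> ('v \<Rightarrow> 'w set) \<Rightarrow> 'w \<Rightarrow> 'v fm \<Rightarrow> bool" where
  "sat W R f V w (Var p) = (w \<in> V p)"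
| "sat W R f V w (And a b) = (sat W R f V w a \<and> sat W R f V w b)"
| "sat W R f V w (Neg a) = (\<not> sat W R f V w a)"
| "sat W R f V w (Box a) = (\<forall>v\<in>W. R w v \<longrightarrow> sat W R f V v a)"
| "sat W R f V w (Next a) = sat W R f V (f w) a"

definition valid_on :: "'w set \<Rightarrow> ('w \<Rightarrow> 'w \<Rightarrow> bool) \<Rightarrow> ('w \<Rightarrow> 'w) \<Rightarrow> 'v fm \<Rightarrow> bool" where
  "valid_on W R f \<phi> \<longleftrightarrow> (\<forall>V. \<forall>w\<in>W. sat W R f V w \<phi>)"

end

theory Submission imports Defs begin

definition bot :: "'v fm" where "bot = And (Var undefined) (Neg (Var undefined))"
definition top :: "'v fm" where "top = Neg bot"

fun cj :: "'v fm list \<Rightarrow> 'v fm" where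
  "cj [] = top"
| "cj (a # L) = And a (cj L)"

lemma peval_cj: "peval g (cj L) \<longleftrightarrow> (\<forall>x\<in>set L. peval g x)"
  by (induction L) (auto simp: top_def bot_def)

lemma peval_Imp[simp]: "peval g (Imp a b) = (peval g a \<longrightarrow> peval g b)"
  by (simp add: Imp_def)
lemma peval_Or[simp]: "peval g (Or a b) = (peval g a \<or> peval g b)"
  by (simp add: Or_def)
lemma peval_Iff[simp]: "peval g (Iff a b) = (peval g a \<longleftrightarrow> peval g b)"
  by (auto simp add: Iff_def)

lemma GLC_tautmp: "GLC a \<Longrightarrow> taut (Imp a b) \<Longrightarrow> GLC b"
  by (rule GLC.MP[OF GLC.Taut])

definition cons :: "'v fm set \<Rightarrow> bool" where
  "cons S \<longleftrightarrow> (\<forall>L. set L \<subseteq> S \<longrightarrow> \<not> GLC (Neg (cj L)))"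

definition mcs :: "'v fm set \<Rightarrow> bool" where
  "mcs G \<longleftrightarrow> (\<forall>\<psi>. GLC \<psi> \<longrightarrow> \<psi> \<in> G) \<and> (\<forall>a b. And a b \<in> G \<longleftrightarrow> a \<in> G \<and> b \<in> G)
     \<and> (\<forall>a. Neg a \<in> G \<longleftrightarrow> a \<notin> G)"

lemma mcs_GLC: "mcs G \<Longrightarrow> GLC a \<Longrightarrow> a \<in> G" by (simp add: mcs_def)
lemma mcs_And[simp]: "mcs G \<Longrightarrow> And a b \<in> G \<longleftrightarrow> a \<in> G \<and> b \<in> G" by (simp add: mcs_def)
lemma mcs_Neg[simp]: "mcs G \<Longrightarrow> Neg a \<in> G \<longleftrightarrow> a \<notin> G" by (simp add: mcs_def)
lemma mcs_Imp[simp]: "mcs G \<Longrightarrow> Imp a b \<in> G \<longleftrightarrow> (a \<in> G \<longrightarrow> b \<in> G)" by (simp add: Imp_def)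
lemma mcs_Or[simp]: "mcs G \<Longrightarrow> Or a b \<in> G \<longleftrightarrow> (a \<in> G \<or> b \<in> G)" by (simp add: Or_def)
lemma mcs_Iff[simp]: "mcs G \<Longrightarrow> Iff a b \<in> G \<longleftrightarrow> (a \<in> G \<longleftrightarrow> b \<in> G)" by (auto simp add: Iff_def)
lemma mcs_mp: "mcs G \<Longrightarrow> GLC (Imp a b) \<Longrightarrow> a \<in> G \<Longrightarrow> b \<in> G"
  using mcs_GLC mcs_Imp by blast
lemma mcs_taut: "mcs G \<Longrightarrow> taut (Imp a b) \<Longrightarrow> a \<in> G \<Longrightarrow> b \<in> G"
  using mcs_mp GLC.Taut by blast

lemma top_taut: "taut top" by (simp add: taut_def top_def bot_def)
lemma mcs_top: "mcs G \<Longrightarrow> top \<in> G" using top_taut mcs_GLC GLC.Taut by blast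

lemma mcs_cj: "mcs G \<Longrightarrow> set L \<subseteq> G \<Longrightarrow> cj L \<in> G"
  by (induction L) (simp_all add: mcs_top)

lemma chain_fin:
  assumes "C \<in> chains A" "C \<noteq> {}" "set L \<subseteq> \<Union>C"
  shows "\<exists>X\<in>C. set L \<subseteq> X"
  using assms(3)
proof (induction L)
  case Nil then show ?case using assms(2) by auto
next
  case (Cons a L)
  then obtain X where X: "X \<in> C" "set L \<subseteq> X" by auto
  from Cons.prems obtain Y where Y: "Y \<in> C" "a \<in> Y" by auto
  have "X \<subseteq> Y \<or> Y \<subseteq> X" using assms(1) X(1) Y(1) unfolding chains_def chain_subset_def by blast
  then show ?case using X Y by auto
qed

lemma cons_taut: "cons M \<Longrightarrow> set L \<subseteq> M \<Longrightarrow> taut (Neg (cj L)) \<Longrightarrow> False"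
  unfolding cons_def using GLC.Taut by blast

lemma incons_insert:
  assumes "\<not> cons (insert a M)"
  shows "\<exists>L. set L \<subseteq> M \<and> GLC (Imp (cj L) (Neg a))"
proof -
  obtain L where L: "set L \<subseteq> insert a M" "GLC (Neg (cj L))" using assms cons_def by blast
  let ?L = "filter (\<lambda>x. x \<noteq> a) L"
  have "taut (Imp (Neg (cj L)) (Imp (cj ?L) (Neg a)))"
    unfolding taut_def by (auto simp: peval_cj)
  then have "GLC (Imp (cj ?L) (Neg a))" using L(2) GLC_tautmp by blast
  moreover have "set ?L \<subseteq> M" using L(1) by auto
  ultimately show ?thesis by blast
qed

lemma lindenbaum:
  assumes "cons S"
  shows "\<exists>M. S \<subseteq> M \<and> mcs M"
proof -
  let ?A = "{T. S \<subseteq> T \<and> cons T}"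
  have "\<forall>C\<in>chains ?A. \<exists>U\<in>?A. \<forall>X\<in>C. X \<subseteq> U"
  proof
    fix C assume C: "C \<in> chains ?A"
    show "\<exists>U\<in>?A. \<forall>X\<in>C. X \<subseteq> U"
    proof (cases "C = {}")
      case True then show ?thesis using assms by auto
    next
      case False
      have "cons (\<Union>C)" unfolding cons_def
      proof (intro allI impI)
        fix L assume "set L \<subseteq> \<Union>C"
        then obtain X where "X \<in> C" "set L \<subseteq> X" using chain_fin[OF C False] by blast
        moreover have "C \<subseteq> ?A" using C by (simp add: chains_def)
        ultimately have "cons X" by blast
        then show "\<not> GLC (Neg (cj L))" using \<open>set L \<subseteq> X\<close> unfolding cons_def by blast
      qed
      moreover have "S \<subseteq> \<Union>C"
      proof -
        obtain X where "X \<in> C" using False by blast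
        moreover have "C \<subseteq> ?A" using C by (simp add: chains_def)
        ultimately show ?thesis by blast
      qed
      ultimately show ?thesis by blast
    qed
  qed
  then have "\<exists>M\<in>?A. \<forall>X\<in>?A. M \<subseteq> X \<longrightarrow> X = M" by (rule Zorn_Lemma2)
  then obtain M where M: "M \<in> ?A" "\<forall>X\<in>?A. M \<subseteq> X \<longrightarrow> X = M" by blast
  have max: "cons (insert a M) \<Longrightarrow> a \<in> M" for a
  proof -
    assume "cons (insert a M)"
    moreover have "S \<subseteq> insert a M" using M(1) by blast
    ultimately have "insert a M \<in> ?A" by blast
    then have "insert a M = M" using M(2) by blast
    then show ?thesis by blast
  qed
  have consM: "cons M" using M by blast
  have either: "a \<in> M \<or> Neg a \<in> M" for a
  proof (rule ccontr)
    assume "\<not> (a \<in> M \<or> Neg a \<in> M)"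
    then have "\<not> cons (insert a M)" "\<not> cons (insert (Neg a) M)" using max by blast+
    obtain L1 where L1: "set L1 \<subseteq> M" "GLC (Imp (cj L1) (Neg a))" using incons_insert[of a M] \<open>\<not> cons (insert a M)\<close> by blast
    obtain L2 where L2: "set L2 \<subseteq> M" "GLC (Imp (cj L2) (Neg (Neg a)))" using incons_insert[of "Neg a" M] \<open>\<not> cons (insert (Neg a) M)\<close> by blast
    have "taut (Imp (Imp (cj L1) (Neg a)) (Imp (Imp (cj L2) (Neg (Neg a))) (Neg (cj (L1 @ L2)))))"
      unfolding taut_def by (auto simp: peval_cj)
    then have "GLC (Neg (cj (L1 @ L2)))" using GLC.MP[OF GLC_tautmp[OF L1(2)] L2(2)] by blast
    moreover have "set (L1 @ L2) \<subseteq> M" using L1(1) L2(1) by simp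
    ultimately show False using consM unfolding cons_def by blast
  qed
  have notboth: "\<not> (a \<in> M \<and> Neg a \<in> M)" for a
  proof
    assume "a \<in> M \<and> Neg a \<in> M"
    moreover have "taut (Neg (cj [a, Neg a]))" unfolding taut_def by (auto simp: peval_cj)
    ultimately show False using consM cons_taut[of M "[a, Neg a]"] by simp
  qed
  have neg: "Neg a \<in> M \<longleftrightarrow> a \<notin> M" for a using either notboth by blast
  have thmM: "GLC a \<Longrightarrow> a \<in> M" for a
  proof (rule ccontr)
    assume "GLC a" "a \<notin> M"
    then have "Neg a \<in> M" using either by blast
    have "taut (Imp a (Neg (cj [Neg a])))" unfolding taut_def by (auto simp: peval_cj)
    then have "GLC (Neg (cj [Neg a]))" using \<open>GLC a\<close> GLC_tautmp by blast
    moreover have "set [Neg a] \<subseteq> M" using \<open>Neg a \<in> M\<close> by simp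
    ultimately show False using consM unfolding cons_def by blast
  qed
  have conj: "And a b \<in> M \<longleftrightarrow> a \<in> M \<and> b \<in> M" for a b
  proof
    assume H: "And a b \<in> M"
    show "a \<in> M \<and> b \<in> M"
    proof (rule ccontr)
      assume "\<not> (a \<in> M \<and> b \<in> M)"
      then have "Neg a \<in> M \<or> Neg b \<in> M" using either by blast
      then obtain c where "c \<in> M" "c = Neg a \<or> c = Neg b" by blast
      moreover have "taut (Neg (cj [And a b, c]))" if "c = Neg a \<or> c = Neg b"
        using that unfolding taut_def by (auto simp: peval_cj)
      ultimately show False using consM H cons_taut[of M "[And a b, c]"] by simp
    qed
  next
    assume H: "a \<in> M \<and> b \<in> M"
    show "And a b \<in> M"
    proof (rule ccontr)
      assume "And a b \<notin> M"
      then have "Neg (And a b) \<in> M" using either by blast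
      moreover have "taut (Neg (cj [a, b, Neg (And a b)]))"
        unfolding taut_def by (auto simp: peval_cj)
      ultimately show False using consM H cons_taut[of M "[a, b, Neg (And a b)]"] by simp
    qed
  qed
  have "mcs M" unfolding mcs_def by (simp add: thmM conj neg)
  moreover have "S \<subseteq> M" using M(1) by simp
  ultimately show ?thesis by blast
qed


definition Rc :: "'v fm set \<Rightarrow> 'v fm set \<Rightarrow> bool" where
  "Rc G D \<longleftrightarrow> (\<forall>\<psi>. Box \<psi> \<in> G \<longrightarrow> \<psi> \<in> D \<and> Box \<psi> \<in> D)"

definition nx :: "'v fm set \<Rightarrow> 'v fm set" where
  "nx G = {\<psi>. Next \<psi> \<in> G}"

lemma Rc_trans: "Rc A B \<Longrightarrow> Rc B C \<Longrightarrow> Rc A C"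
  unfolding Rc_def by blast

lemma mcs_nx: assumes "mcs G" shows "mcs (nx G)"
proof -
  have 1: "GLC \<psi> \<Longrightarrow> \<psi> \<in> nx G" for \<psi>
    using assms GLC.NecNext mcs_GLC unfolding nx_def by blast
  have 2: "And a b \<in> nx G \<longleftrightarrow> a \<in> nx G \<and> b \<in> nx G" for a b
    using mcs_GLC[OF assms GLC.NextAnd[of a b]] assms unfolding nx_def by simp
  have 3: "Neg a \<in> nx G \<longleftrightarrow> a \<notin> nx G" for a
    using mcs_GLC[OF assms GLC.NextNeg[of a]] assms unfolding nx_def by simp
  show ?thesis unfolding mcs_def using 1 2 3 by blast
qed

lemma mcs_box_mono: "mcs G \<Longrightarrow> GLC (Imp a b) \<Longrightarrow> Box a \<in> G \<Longrightarrow> Box b \<in> G"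
  using mcs_GLC[of G "Imp (Box (Imp a b)) (Imp (Box a) (Box b))"] GLC.K GLC.NecBox mcs_GLC
  by (metis mcs_Imp)

lemma mcs_box_and: assumes "mcs G" "Box a \<in> G" "Box b \<in> G" shows "Box (And a b) \<in> G"
proof -
  have "taut (Imp a (Imp b (And a b)))" by (simp add: taut_def)
  then have "Box (Imp b (And a b)) \<in> G" using mcs_box_mono[OF assms(1) _ assms(2)] GLC.Taut by blast
  then show ?thesis using mcs_GLC[OF assms(1) GLC.K[of b "And a b"]] assms by simp
qed

lemma mcs_box_cj: "mcs A \<Longrightarrow> \<forall>x\<in>set L. Box x \<in> A \<Longrightarrow> Box (cj L) \<in> A"
proof (induction L)
  case Nil then show ?case using mcs_GLC GLC.NecBox GLC.Taut top_taut by fastforce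
next
  case (Cons a L) then show ?case using mcs_box_and[of A a "cj L"] by simp
qed

lemma wit_ex:
  assumes A: "mcs A" and nb: "Box \<psi> \<notin> A"
  shows "\<exists>B. mcs B \<and> Rc A B \<and> Box \<psi> \<in> B \<and> \<psi> \<notin> B"
proof -
  let ?S = "{\<chi>. Box \<chi> \<in> A} \<union> {Box \<chi> | \<chi>. Box \<chi> \<in> A} \<union> {Box \<psi>, Neg \<psi>}"
  have "cons ?S"
    unfolding cons_def
  proof (intro allI impI notI)
    fix L assume L: "set L \<subseteq> ?S" and G: "GLC (Neg (cj L))"
    let ?L0 = "filter (\<lambda>x. Box x \<in> A) L"
    have four: "Box \<chi> \<in> A \<Longrightarrow> Box (Box \<chi>) \<in> A" for \<chi>
      using mcs_GLC[OF A GLC.Four[of \<chi>]] A by simp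
    have cls: "\<forall>x\<in>set L. Box x \<in> A \<or> x = Box \<psi> \<or> x = Neg \<psi>"
      using L four by blast
    have "taut (Imp (Neg (cj L)) (Imp (cj ?L0) (Imp (Box \<psi>) \<psi>)))"
      unfolding taut_def using cls by (auto simp: peval_cj)
    then have "GLC (Imp (cj ?L0) (Imp (Box \<psi>) \<psi>))" using G GLC_tautmp by blast
    moreover have "Box (cj ?L0) \<in> A" using mcs_box_cj[OF A] by simp
    ultimately have "Box (Imp (Box \<psi>) \<psi>) \<in> A" using mcs_box_mono[OF A] by blast
    then have "Box \<psi> \<in> A" using mcs_GLC[OF A GLC.L[of \<psi>]] A by simp
    then show False using nb by blast
  qed
  then obtain B where B: "?S \<subseteq> B" "mcs B" using lindenbaum by blast
  have "Rc A B" unfolding Rc_def using B(1) by blast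
  moreover have "Box \<psi> \<in> B" "Neg \<psi> \<in> B" using B(1) by auto
  ultimately show ?thesis using B(2) by auto
qed

lemma key1:
  assumes G: "mcs G" and D: "mcs D" and R: "Rc G D" and c1: "Next \<chi> \<in> G" and c2: "Next \<chi> \<notin> D"
    and b: "Next (Box \<psi>) \<in> G"
  shows "Next \<psi> \<in> D"
proof -
  have nG: "mcs (nx G)" and nD: "mcs (nx D)" using mcs_nx G D by auto
  have "\<chi> \<in> nx G" using c1 by (simp add: nx_def)
  then have x1: "Or \<psi> \<chi> \<in> nx G" using nG by simp
  have "taut (Imp \<psi> (Or \<psi> \<chi>))" by (simp add: taut_def)
  then have x2: "Box (Or \<psi> \<chi>) \<in> nx G" using mcs_box_mono[OF nG GLC.Taut] b by (simp add: nx_def)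
  have "Box (Next (Or \<psi> \<chi>)) \<in> G"
    using mcs_GLC[OF G GLC.C[of "Or \<psi> \<chi>"]] G x1 x2 by (simp add: nx_def)
  then have "Or \<psi> \<chi> \<in> nx D" using R unfolding Rc_def nx_def by blast
  moreover have "\<chi> \<notin> nx D" using c2 by (simp add: nx_def)
  ultimately have "\<psi> \<in> nx D" using nD by simp
  then show ?thesis by (simp add: nx_def)
qed

lemma key:
  assumes G: "mcs G" and D: "mcs D" and R: "Rc G D"
  shows "nx G = nx D \<or> Rc (nx G) (nx D)"
proof (cases "nx G = nx D")
  case False
  have nG: "mcs (nx G)" and nD: "mcs (nx D)" using mcs_nx G D by auto
  obtain \<chi> where c: "\<chi> \<in> nx G" "\<chi> \<notin> nx D"
  proof (cases "nx G \<subseteq> nx D")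
    case True
    then obtain x where "x \<in> nx D" "x \<notin> nx G" using False by blast
    then have "Neg x \<in> nx G" "Neg x \<notin> nx D" using nG nD by auto
    then show ?thesis using that by blast
  next
    case False then show ?thesis using that by blast
  qed
  have "\<psi> \<in> nx D \<and> Box \<psi> \<in> nx D" if "Box \<psi> \<in> nx G" for \<psi>
  proof -
    have "Box (Box \<psi>) \<in> nx G" using mcs_GLC[OF nG GLC.Four[of \<psi>]] nG that by simp
    then show ?thesis using key1[OF G D R, of \<chi>] c that by (simp add: nx_def)
  qed
  then show ?thesis unfolding Rc_def by blast
qed simp


fun sub :: "'v fm \<Rightarrow> 'v fm set" where
  "sub (Var p) = {Var p}"
| "sub (And a b) = insert (And a b) (sub a \<union> sub b)"
| "sub (Neg a) = insert (Neg a) (sub a)"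
| "sub (Box a) = insert (Box a) (sub a)"
| "sub (Next a) = insert (Next a) (sub a)"

lemma finite_sub: "finite (sub a)" by (induction a) auto
lemma sub_self: "a \<in> sub a" by (cases a) auto
lemma sub_trans: "x \<in> sub y \<Longrightarrow> sub x \<subseteq> sub y" by (induction y) auto

fun nd :: "'v fm \<Rightarrow> nat" where
  "nd (Var p) = 0"
| "nd (And a b) = max (nd a) (nd b)"
| "nd (Neg a) = nd a"
| "nd (Box a) = nd a"
| "nd (Next a) = Suc (nd a)"

fun chn :: "'v fm set list \<Rightarrow> bool" where
  "chn [] = True"
| "chn [A] = True"
| "chn (B # A # p) = (Rc A B \<and> chn (A # p))"

definition good :: "'v fm set list \<Rightarrow> bool" where
  "good p \<longleftrightarrow> p \<noteq> [] \<and> (\<forall>A\<in>set p. mcs A) \<and> chn p"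

lemma chn_Cons: "chn (B # p) \<longleftrightarrow> (p = [] \<or> (Rc (hd p) B \<and> chn p))"
  by (cases p) auto

lemma chn_suffix: "chn (z @ x) \<Longrightarrow> chn x"
  by (induction z) (auto simp: chn_Cons)

lemma chn_Rc: "chn (z @ x) \<Longrightarrow> z \<noteq> [] \<Longrightarrow> x \<noteq> [] \<Longrightarrow> Rc (hd x) (hd (z @ x))"
proof (induction z)
  case Nil then show ?case by simp
next
  case (Cons B z)
  show ?case
  proof (cases "z = []")
    case True then show ?thesis using Cons.prems by (simp add: chn_Cons)
  next
    case False
    have "chn (z @ x)" "Rc (hd (z @ x)) B" using Cons.prems False by (auto simp: chn_Cons)
    then show ?thesis using Cons.IH False Cons.prems(3) Rc_trans by fastforce
  qed
qed

definition wit :: "'v fm set \<Rightarrow> 'v fm \<Rightarrow> 'v fm set" where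
  "wit A \<psi> = (SOME B. mcs B \<and> Rc A B \<and> Box \<psi> \<in> B \<and> \<psi> \<notin> B)"

lemma wit: "mcs A \<Longrightarrow> Box \<psi> \<notin> A \<Longrightarrow> mcs (wit A \<psi>) \<and> Rc A (wit A \<psi>) \<and> Box \<psi> \<in> wit A \<psi> \<and> \<psi> \<notin> wit A \<psi>"
  unfolding wit_def using someI_ex[OF wit_ex] by blast

inductive_set clo :: "'v fm set \<Rightarrow> 'v fm set list set \<Rightarrow> 'v fm set list set" for BS S where
  base: "p \<in> S \<Longrightarrow> p \<in> clo BS S"
| step: "p \<in> clo BS S \<Longrightarrow> \<psi> \<in> BS \<Longrightarrow> Box \<psi> \<notin> hd p \<Longrightarrow> wit (hd p) \<psi> # p \<in> clo BS S"

lemma good_clo: "p \<in> clo BS S \<Longrightarrow> \<forall>q\<in>S. good q \<Longrightarrow> good p"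
proof (induction rule: clo.induct)
  case (step p \<psi>)
  then have "mcs (hd p)" "p \<noteq> []" by (auto simp: good_def)
  then show ?case using step wit[of "hd p" \<psi>] by (auto simp: good_def chn_Cons)
qed auto

definition bc :: "'v fm set \<Rightarrow> 'v fm set \<Rightarrow> nat" where
  "bc BS A = card {\<chi>\<in>BS. Box \<chi> \<in> A}"

definition stp :: "'v fm set \<Rightarrow> 'v fm set list set \<Rightarrow> 'v fm set list set" where
  "stp BS T = {wit (hd p) \<psi> # p | p \<psi>. p \<in> T \<and> \<psi> \<in> BS \<and> Box \<psi> \<notin> hd p}"

lemma finite_stp: "finite T \<Longrightarrow> finite BS \<Longrightarrow> finite (stp BS T)"
proof -
  assume "finite T" "finite BS"
  have "stp BS T \<subseteq> (\<lambda>(p,\<psi>). wit (hd p) \<psi> # p) ` (T \<times> BS)"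
    unfolding stp_def by auto
  then show ?thesis using \<open>finite T\<close> \<open>finite BS\<close> finite_subset by blast
qed

lemma finite_stp_pow: "finite T \<Longrightarrow> finite BS \<Longrightarrow> finite ((stp BS ^^ n) T)"
  by (induction n) (auto simp: finite_stp)

lemma bc_le: "finite BS \<Longrightarrow> bc BS A \<le> card BS"
  unfolding bc_def by (simp add: card_mono)

lemma clo_level:
  assumes "p \<in> clo BS S" "\<forall>q\<in>S. good q" "finite BS"
  shows "\<exists>n\<le>bc BS (hd p). p \<in> (stp BS ^^ n) S"
  using assms
proof (induction rule: clo.induct)
  case (base p) then show ?case by (intro exI[of _ 0]) auto
next
  case (step p \<psi>)
  then obtain n where n: "n \<le> bc BS (hd p)" "p \<in> (stp BS ^^ n) S" by blast
  have g: "good p" using good_clo step by blast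
  then have m: "mcs (hd p)" by (auto simp: good_def)
  have w: "mcs (wit (hd p) \<psi>) \<and> Rc (hd p) (wit (hd p) \<psi>) \<and> Box \<psi> \<in> wit (hd p) \<psi>"
    using wit[OF m step.hyps(3)] by blast
  have "{\<chi>\<in>BS. Box \<chi> \<in> hd p} \<subset> {\<chi>\<in>BS. Box \<chi> \<in> wit (hd p) \<psi>}"
    using w step.hyps(2,3) unfolding Rc_def by blast
  then have "bc BS (hd p) < bc BS (wit (hd p) \<psi>)"
    unfolding bc_def using step.prems(2) by (simp add: psubset_card_mono)
  moreover have "wit (hd p) \<psi> # p \<in> (stp BS ^^ Suc n) S"
    using n(2) step.hyps(2,3) unfolding stp_def by auto
  ultimately show ?case using n(1) by (intro exI[of _ "Suc n"]) auto
qed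

lemma finite_clo:
  assumes "finite S" "\<forall>q\<in>S. good q" "finite BS"
  shows "finite (clo BS S)"
proof -
  have "clo BS S \<subseteq> (\<Union>n\<in>{..card BS}. (stp BS ^^ n) S)"
  proof
    fix p assume "p \<in> clo BS S"
    then obtain n where "n \<le> bc BS (hd p)" "p \<in> (stp BS ^^ n) S"
      using clo_level assms by blast
    moreover have "bc BS (hd p) \<le> card BS" using bc_le assms(3) by blast
    ultimately show "p \<in> (\<Union>n\<in>{..card BS}. (stp BS ^^ n) S)" by auto
  qed
  moreover have "finite (\<Union>n\<in>{..card BS}. (stp BS ^^ n) S)"
    using finite_stp_pow assms by blast
  ultimately show ?thesis using finite_subset by blast
qed

fun gim :: "'v fm set list \<Rightarrow> 'v fm set list" where
  "gim [] = []"
| "gim [A] = [nx A]"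
| "gim (B # A # p) = (let q = gim (A # p) in if nx B = hd q then q else nx B # q)"

lemma gim_hd: "p \<noteq> [] \<Longrightarrow> gim p \<noteq> [] \<and> hd (gim p) = nx (hd p)"
  by (induction p rule: gim.induct) (auto simp: Let_def)

lemma gim_Cons: "p \<noteq> [] \<Longrightarrow> gim (B # p) = (if nx B = hd (gim p) then gim p else nx B # gim p)"
  by (cases p) (auto simp: Let_def)

lemma gim_good: "good p \<Longrightarrow> good (gim p)"
proof (induction p rule: gim.induct)
  case 1 then show ?case by (simp add: good_def)
next
  case (2 A) then show ?case by (simp add: good_def mcs_nx)
next
  case (3 B A p)
  have gA: "good (A # p)" using "3.prems" by (simp add: good_def)
  then have IH: "good (gim (A # p))" using "3.IH" by simp
  have hq: "gim (A # p) \<noteq> []" "hd (gim (A # p)) = nx A" using gim_hd[of "A # p"] by auto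
  have mB: "mcs B" "mcs A" "Rc A B" using "3.prems" by (auto simp: good_def)
  show ?case
  proof (cases "nx B = hd (gim (A # p))")
    case True then show ?thesis using IH by (simp add: Let_def)
  next
    case False
    then have "Rc (nx A) (nx B)" using key[OF mB(2,1,3)] hq by auto
    then show ?thesis using IH False hq mcs_nx[OF mB(1)]
      by (auto simp: good_def Let_def chn_Cons)
  qed
qed

lemma gim_suffix: "x \<noteq> [] \<Longrightarrow> \<exists>z'. gim (z @ x) = z' @ gim x"
proof (induction z)
  case Nil then show ?case by simp
next
  case (Cons B z)
  then obtain z' where z': "gim (z @ x) = z' @ gim x" by blast
  have "gim (B # (z @ x)) = (if nx B = hd (gim (z @ x)) then gim (z @ x) else nx B # gim (z @ x))"
    using gim_Cons Cons.prems by blast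
  then show ?case using z' by (metis append_Cons)
qed


locale cm =
  fixes G0 :: "'v fm set" and \<phi> :: "'v fm"
  assumes G0: "mcs G0"
begin

definition BS :: "'v fm set" where "BS = {\<psi>. Box \<psi> \<in> sub \<phi>}"
definition d :: nat where "d = nd \<phi>"

lemma finite_BS: "finite BS"
proof -
  have "BS \<subseteq> (\<lambda>x. case x of Box a \<Rightarrow> a | _ \<Rightarrow> x) ` sub \<phi>"
    unfolding BS_def by (auto intro: image_eqI[where x="Box _"])
  then show ?thesis using finite_sub finite_subset by blast
qed

primrec lay :: "nat \<Rightarrow> 'v fm set list set" where
  "lay 0 = clo BS {[G0]}"
| "lay (Suc k) = clo BS (gim ` lay k)"

lemma lay_good_fin: "(\<forall>p\<in>lay k. good p) \<and> finite (lay k)"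
proof (induction k)
  case 0
  have "good [G0]" using G0 by (simp add: good_def)
  then show ?case using good_clo finite_clo[of "{[G0]}" BS] finite_BS by auto
next
  case (Suc k)
  then have S: "\<forall>q\<in>gim ` lay k. good q" "finite (gim ` lay k)" using gim_good by auto
  then show ?case using good_clo[of _ BS "gim ` lay k"] finite_clo[OF S(2) S(1) finite_BS] by simp
qed

definition WW :: "(nat \<times> 'v fm set list) set" where "WW = Sigma {..d} lay"
definition RR :: "nat \<times> 'v fm set list \<Rightarrow> nat \<times> 'v fm set list \<Rightarrow> bool" where
  "RR x y \<longleftrightarrow> fst x = fst y \<and> (\<exists>z. z \<noteq> [] \<and> snd y = z @ snd x)"
definition FF :: "nat \<times> 'v fm set list \<Rightarrow> nat \<times> 'v fm set list" where
  "FF x = (if fst x < d then (Suc (fst x), gim (snd x)) else x)"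
definition VV :: "'v \<Rightarrow> (nat \<times> 'v fm set list) set" where
  "VV v = {x. Var v \<in> hd (snd x)}"

lemma frame: "finite_dynamic_GL_frame WW RR FF"
proof -
  have ne: "(0, [G0]) \<in> WW" unfolding WW_def by (auto intro: clo.base)
  have fW: "\<forall>w\<in>WW. FF w \<in> WW"
    unfolding WW_def FF_def by (auto intro: clo.base)
  have mono: "\<forall>w\<in>WW. \<forall>v\<in>WW. RR w v \<longrightarrow> FF w = FF v \<or> RR (FF w) (FF v)"
  proof (intro ballI impI)
    fix w v assume w: "w \<in> WW" and v: "v \<in> WW" and r: "RR w v"
    obtain k p where wk: "w = (k, p)" by (cases w)
    obtain z where z: "z \<noteq> []" "v = (k, z @ p)" using r wk by (cases v) (auto simp: RR_def)
    have "p \<noteq> []" using w wk lay_good_fin unfolding WW_def good_def by auto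
    then obtain z' where z': "gim (z @ p) = z' @ gim p" using gim_suffix by blast
    show "FF w = FF v \<or> RR (FF w) (FF v)"
    proof (cases "k < d")
      case True then show ?thesis using z z' wk unfolding FF_def RR_def by (cases "z' = []") auto
    next
      case False then show ?thesis using z wk unfolding FF_def RR_def by auto
    qed
  qed
  have fin: "finite WW" unfolding WW_def using lay_good_fin by blast
  have tr: "\<forall>u\<in>WW. \<forall>v\<in>WW. \<forall>w\<in>WW. RR u v \<longrightarrow> RR v w \<longrightarrow> RR u w"
    unfolding RR_def by (metis append.assoc append_is_Nil_conv)
  have irr: "\<forall>w\<in>WW. \<not> RR w w"
    unfolding RR_def by (metis append_self_conv2)
  show ?thesis unfolding finite_dynamic_GL_frame_def dynamic_frame_def
    using ne fW mono fin tr irr by blast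
qed

lemma truth:
  "\<psi> \<in> sub \<phi> \<Longrightarrow> k \<le> d \<Longrightarrow> p \<in> lay k \<Longrightarrow> nd \<psi> + k \<le> d \<Longrightarrow>
    (sat WW RR FF VV (k, p) \<psi> \<longleftrightarrow> \<psi> \<in> hd p)"
proof (induction \<psi> arbitrary: k p)
  case (Var x) then show ?case by (simp add: VV_def)
next
  case (And a b)
  have "a \<in> sub \<phi>" "b \<in> sub \<phi>" using sub_trans[OF And.prems(1)] sub_self[of a] sub_self[of b] by auto
  moreover have "mcs (hd p)" using And.prems(3) lay_good_fin by (auto simp: good_def)
  ultimately show ?case using And by simp
next
  case (Neg a)
  have "a \<in> sub \<phi>" using sub_trans[OF Neg.prems(1)] sub_self by fastforce
  moreover have "mcs (hd p)" using Neg.prems(3) lay_good_fin by (auto simp: good_def)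
  ultimately show ?case using Neg by simp
next
  case (Box a)
  have a: "a \<in> sub \<phi>" using sub_trans[OF Box.prems(1)] sub_self by fastforce
  have gp: "good p" using Box.prems(3) lay_good_fin by auto
  then have m: "mcs (hd p)" by (auto simp: good_def)
  show ?case
  proof
    assume s: "sat WW RR FF VV (k, p) (Box a)"
    show "Box a \<in> hd p"
    proof (rule ccontr)
      assume nb: "Box a \<notin> hd p"
      have "a \<in> BS" using Box.prems(1) by (simp add: BS_def)
      then have q: "wit (hd p) a # p \<in> lay k"
        using Box.prems(3) nb clo.step by (cases k) (auto intro: clo.step)
      have "(k, wit (hd p) a # p) \<in> WW" using q Box.prems(2) by (simp add: WW_def)
      moreover have "RR (k, p) (k, wit (hd p) a # p)" by (simp add: RR_def)
      ultimately have "sat WW RR FF VV (k, wit (hd p) a # p) a" using s by simp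
      then have "a \<in> wit (hd p) a" using Box.IH[OF a Box.prems(2) q] Box.prems(4) by simp
      then show False using wit[OF m nb] by blast
    qed
  next
    assume b: "Box a \<in> hd p"
    show "sat WW RR FF VV (k, p) (Box a)"
    proof (simp, intro ballI impI)
      fix v assume v: "v \<in> WW" "RR (k, p) v"
      then obtain z where z: "z \<noteq> []" "v = (k, z @ p)" by (cases v) (auto simp: RR_def)
      have q: "z @ p \<in> lay k" using v(1) z by (simp add: WW_def)
      then have "good (z @ p)" using lay_good_fin by blast
      then have "chn (z @ p)" "p \<noteq> []" using gp by (auto simp: good_def)
      then have "Rc (hd p) (hd (z @ p))" using chn_Rc z(1) by blast
      then have "a \<in> hd (z @ p)" using b unfolding Rc_def by blast
      then show "sat WW RR FF VV v a" using Box.IH[OF a Box.prems(2) q] Box.prems(4) z by simp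
    qed
  qed
next
  case (Next a)
  have a: "a \<in> sub \<phi>" using sub_trans[OF Next.prems(1)] sub_self by fastforce
  have kd: "k < d" using Next.prems(4) by simp
  have gp: "good p" using Next.prems(3) lay_good_fin by auto
  then have pn: "p \<noteq> []" by (simp add: good_def)
  have q: "gim p \<in> lay (Suc k)" using Next.prems(3) by (auto intro: clo.base)
  have "sat WW RR FF VV (k, p) (Next a) = sat WW RR FF VV (Suc k, gim p) a"
    using kd by (simp add: FF_def)
  also have "\<dots> = (a \<in> hd (gim p))" using Next.IH[OF a _ q] kd Next.prems(4) by simp
  also have "\<dots> = (Next a \<in> hd p)" using gim_hd[OF pn] by (simp add: nx_def)
  finally show ?case .
qed

lemma countermodel:
  assumes "\<phi> \<notin> G0"
  shows "(0, [G0]) \<in> WW \<and> \<not> sat WW RR FF VV (0, [G0]) \<phi>"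
proof -
  have "[G0] \<in> lay 0" by (auto intro: clo.base)
  moreover have "(0, [G0]) \<in> WW" unfolding WW_def by (auto intro: clo.base)
  ultimately show ?thesis using truth[OF sub_self, of 0 "[G0]"] assms by (simp add: d_def)
qed

end


lemma sat_Imp[simp]: "sat W R f V w (Imp a b) = (sat W R f V w a \<longrightarrow> sat W R f V w b)"
  by (simp add: Imp_def)
lemma sat_Iff[simp]: "sat W R f V w (Iff a b) = (sat W R f V w a \<longleftrightarrow> sat W R f V w b)"
  by (simp add: Iff_def) blast
lemma sat_peval: "sat W R f V w \<phi> = peval (\<lambda>\<psi>. sat W R f V w \<psi>) \<phi>"
proof (induction \<phi>)
  case (And a b) then show ?case by (simp only: sat.simps peval.simps)
next
  case (Neg a) then show ?case by (simp only: sat.simps peval.simps)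
qed simp_all

lemma fdf0: assumes "finite_dynamic_GL_frame W R f"
  shows "(W \<noteq> {} \<and> (\<forall>w\<in>W. f w \<in> W) \<and> (\<forall>w\<in>W. \<forall>v\<in>W. R w v \<longrightarrow> f w = f v \<or> R (f w) (f v)))
     \<and> finite W \<and> (\<forall>u\<in>W. \<forall>v\<in>W. \<forall>w\<in>W. R u v \<longrightarrow> R v w \<longrightarrow> R u w) \<and> (\<forall>w\<in>W. \<not> R w w)"
  using assms unfolding finite_dynamic_GL_frame_def dynamic_frame_def by assumption

lemma fdf: assumes F: "finite_dynamic_GL_frame W R f"
  shows "finite W" "W \<noteq> {}" "\<And>w. w\<in>W \<Longrightarrow> f w \<in> W"
    "\<And>w v. w\<in>W \<Longrightarrow> v\<in>W \<Longrightarrow> R w v \<Longrightarrow> f w = f v \<or> R (f w) (f v)"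
    "\<And>u v w. u\<in>W \<Longrightarrow> v\<in>W \<Longrightarrow> w\<in>W \<Longrightarrow> R u v \<Longrightarrow> R v w \<Longrightarrow> R u w"
    "\<And>w. w\<in>W \<Longrightarrow> \<not> R w w"
proof -
  note D = fdf0[OF F]
  show "finite W" using D by (elim conjE)
  show "W \<noteq> {}" using D by (elim conjE)
  show "\<And>w. w\<in>W \<Longrightarrow> f w \<in> W" using D by (elim conjE) blast
  show "\<And>w v. w\<in>W \<Longrightarrow> v\<in>W \<Longrightarrow> R w v \<Longrightarrow> f w = f v \<or> R (f w) (f v)" using D by (elim conjE) blast
  show "\<And>u v w. u\<in>W \<Longrightarrow> v\<in>W \<Longrightarrow> w\<in>W \<Longrightarrow> R u v \<Longrightarrow> R v w \<Longrightarrow> R u w" using D by (elim conjE) blast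
  show "\<And>w. w\<in>W \<Longrightarrow> \<not> R w w" using D by (elim conjE) blast
qed


lemma lob_sound:
  assumes F: "finite_dynamic_GL_frame W R f" and w: "w \<in> W"
    and H: "\<forall>v\<in>W. R w v \<longrightarrow> ((\<forall>u\<in>W. R v u \<longrightarrow> sat W R f V u \<phi>) \<longrightarrow> sat W R f V v \<phi>)"
  shows "\<forall>v\<in>W. R w v \<longrightarrow> sat W R f V v \<phi>"
proof -
  note fin = fdf(1)[OF F] and tr' = fdf(5)[OF F] and irr = fdf(6)[OF F]
  have cardlt: "card {x\<in>W. R u x} < card {x\<in>W. R v x}" if u: "u \<in> W" "R v u" "v \<in> W" for u v
  proof -
    have sub: "{x\<in>W. R u x} \<subseteq> {x\<in>W. R v x}"
    proof
      fix x assume "x \<in> {x\<in>W. R u x}"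
      then have "x \<in> W" "R u x" by auto
      then have "R v x" using tr'[OF u(3) u(1) \<open>x \<in> W\<close> u(2)] by blast
      then show "x \<in> {x\<in>W. R v x}" using \<open>x \<in> W\<close> by simp
    qed
    have "u \<in> {x\<in>W. R v x}" "u \<notin> {x\<in>W. R u x}" using u irr[OF u(1)] by auto
    then have "{x\<in>W. R u x} \<subset> {x\<in>W. R v x}" using sub by blast
    then show ?thesis using fin by (simp add: psubset_card_mono)
  qed
  have main: "\<forall>v. card {x\<in>W. R v x} < n \<longrightarrow> v \<in> W \<longrightarrow> R w v \<longrightarrow> sat W R f V v \<phi>" for n
  proof (induction n)
    case 0 then show ?case by simp
  next
    case (Suc n)
    show ?case
    proof (intro allI impI)
      fix v assume v: "card {x\<in>W. R v x} < Suc n" "v \<in> W" "R w v"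
      have "sat W R f V u \<phi>" if u: "u \<in> W" "R v u" for u
      proof -
        have "card {x\<in>W. R u x} < n" using cardlt[OF u v(2)] v(1) by simp
        moreover have "R w u" using tr'[OF w v(2) u(1) v(3) u(2)] .
        ultimately show ?thesis using Suc.IH u(1) by blast
      qed
      then have "\<forall>u\<in>W. R v u \<longrightarrow> sat W R f V u \<phi>" by blast
      then show "sat W R f V v \<phi>" using H v(2,3) by blast
    qed
  qed
  show ?thesis
  proof (intro ballI impI)
    fix v assume "v \<in> W" "R w v"
    then show "sat W R f V v \<phi>" using main[of "Suc (card {x\<in>W. R v x})"] by blast
  qed
qed

lemma soundness:
  assumes "GLC \<phi>" "finite_dynamic_GL_frame W R f"
  shows "valid_on W R f \<phi>"
  using assms(1) unfolding valid_on_def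
proof (induction rule: GLC.induct)
  case (Taut \<phi>)
  show ?case
  proof (intro allI ballI)
    fix V w
    have "peval (sat W R f V w) \<phi>" using Taut.hyps unfolding taut_def by blast
    then show "sat W R f V w \<phi>" by (subst sat_peval)
  qed
next
  case (K \<phi> \<psi>) then show ?case by simp
next
  case (Four \<phi>)
  note tr = fdf(5)[OF assms(2)]
  show ?case
  proof (intro allI ballI)
    fix V w assume w: "w \<in> W"
    show "sat W R f V w (Imp (Box \<phi>) (Box (Box \<phi>)))"
    proof (simp, intro impI ballI)
      fix v u assume H: "\<forall>v\<in>W. R w v \<longrightarrow> sat W R f V v \<phi>" and v: "v \<in> W" "R w v" and u: "u \<in> W" "R v u"
      have "R w u" using tr[OF w v(1) u(1) v(2) u(2)] .
      then show "sat W R f V u \<phi>" using H u(1) by blast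
    qed
  qed
next
  case (L \<phi>)
  show ?case
  proof (intro allI ballI)
    fix V w assume w: "w \<in> W"
    show "sat W R f V w (Imp (Box (Imp (Box \<phi>) \<phi>)) (Box \<phi>))"
      using lob_sound[OF assms(2) w, of V \<phi>] by simp
  qed
next
  case (NextNeg \<phi>) then show ?case by simp
next
  case (NextAnd \<phi> \<psi>) then show ?case by simp
next
  case (C \<phi>)
  note fW = fdf(3)[OF assms(2)] and mono = fdf(4)[OF assms(2)]
  show ?case
  proof (intro allI ballI)
    fix V w assume w: "w \<in> W"
    show "sat W R f V w (Imp (And (Next \<phi>) (Next (Box \<phi>))) (Box (Next \<phi>)))"
    proof (simp, intro impI ballI)
      fix v assume h: "sat W R f V (f w) \<phi> \<and> (\<forall>v\<in>W. R (f w) v \<longrightarrow> sat W R f V v \<phi>)"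
        and v: "v \<in> W" "R w v"
      have "f w = f v \<or> R (f w) (f v)" using mono[OF w v(1) v(2)] .
      moreover have "f v \<in> W" using fW[OF v(1)] .
      ultimately show "sat W R f V (f v) \<phi>" using h by auto
    qed
  qed
next
  case (MP \<phi> \<psi>) then show ?case by simp
next
  case (NecBox \<phi>) then show ?case by simp
next
  case (NecNext \<phi>)
  show ?case using NecNext fdf(3)[OF assms(2)] by simp
qed

lemma transfer:
  fixes W :: "'w set"
  assumes F: "finite_dynamic_GL_frame W R f" and w: "w \<in> W" and ns: "\<not> sat W R f V w \<phi>"
  shows "\<exists>(W' :: nat set) R' f' V' w'. finite_dynamic_GL_frame W' R' f' \<and> w' \<in> W' \<and> \<not> sat W' R' f' V' w' \<phi>"
proof -
  have fin: "finite W" using fdf(1)[OF F] .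
  have "\<exists>h :: 'w \<Rightarrow> nat. inj_on h W" using finite_imp_inj_to_nat_seg[OF fin] by metis
  then obtain h :: "'w \<Rightarrow> nat" where inj: "inj_on h W" by blast
  define ih where "ih = inv_into W h"
  have ihh: "x \<in> W \<Longrightarrow> ih (h x) = x" for x using inj unfolding ih_def by simp
  define W' where "W' = h ` W"
  define R' where "R' = (\<lambda>i j. R (ih i) (ih j))"
  define f' where "f' = (\<lambda>i. h (f (ih i)))"
  define V' where "V' = (\<lambda>p. h ` (V p \<inter> W))"
  have fW: "\<And>x. x \<in> W \<Longrightarrow> f x \<in> W" using fdf(3)[OF F] by blast
  have ball: "(\<forall>j\<in>W'. P j) = (\<forall>v\<in>W. P (h v))" for P unfolding W'_def by simp
  have Rh: "x \<in> W \<Longrightarrow> v \<in> W \<Longrightarrow> R' (h x) (h v) = R x v" for x v unfolding R'_def using ihh by simp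
  have fh: "x \<in> W \<Longrightarrow> f' (h x) = h (f x)" for x unfolding f'_def using ihh by simp
  have Vh: "x \<in> W \<Longrightarrow> (h x \<in> V' p) = (x \<in> V p)" for x p
    unfolding V'_def using inj by (auto simp: inj_on_eq_iff)
  have S: "x \<in> W \<Longrightarrow> sat W' R' f' V' (h x) \<psi> = sat W R f V x \<psi>" for x \<psi>
  proof (induction \<psi> arbitrary: x)
    case (Var p) then show ?case using Vh by simp
  next
    case (And a b) then show ?case by simp
  next
    case (Neg a) then show ?case by simp
  next
    case (Box a)
    have "sat W' R' f' V' (h x) (Box a) = (\<forall>v\<in>W. R' (h x) (h v) \<longrightarrow> sat W' R' f' V' (h v) a)"
      using ball[of "\<lambda>j. R' (h x) j \<longrightarrow> sat W' R' f' V' j a"] by simp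
    also have "\<dots> = (\<forall>v\<in>W. R x v \<longrightarrow> sat W R f V v a)"
      using Rh Box.IH Box.prems by auto
    finally show ?case by simp
  next
    case (Next a)
    have "sat W' R' f' V' (h x) (Next a) = sat W' R' f' V' (h (f x)) a" using fh Next.prems by simp
    also have "\<dots> = sat W R f V (f x) a" using Next.IH fW Next.prems by blast
    finally show ?case by simp
  qed
  have a1: "W' \<noteq> {}" using fdf(2)[OF F] unfolding W'_def by simp
  have a2: "\<forall>i\<in>W'. f' i \<in> W'" unfolding ball
  proof
    fix x assume "x \<in> W"
    then show "f' (h x) \<in> W'" using fh fW unfolding W'_def by simp
  qed
  have a3: "\<forall>i\<in>W'. \<forall>j\<in>W'. R' i j \<longrightarrow> f' i = f' j \<or> R' (f' i) (f' j)"
    unfolding ball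
  proof (intro ballI impI)
    fix x y assume xy: "x \<in> W" "y \<in> W" "R' (h x) (h y)"
    then have "R x y" using Rh by simp
    then have "f x = f y \<or> R (f x) (f y)" using fdf(4)[OF F xy(1,2)] by blast
    moreover have "f' (h x) = h (f x)" "f' (h y) = h (f y)" using fh xy by auto
    moreover have "R' (h (f x)) (h (f y)) = R (f x) (f y)" using Rh fW xy by simp
    ultimately show "f' (h x) = f' (h y) \<or> R' (f' (h x)) (f' (h y))" by auto
  qed
  have a4: "finite W'" unfolding W'_def using fin by simp
  have a5: "\<forall>i\<in>W'. \<forall>j\<in>W'. \<forall>k\<in>W'. R' i j \<longrightarrow> R' j k \<longrightarrow> R' i k"
    unfolding ball
  proof (intro ballI impI)
    fix x y z assume H: "x \<in> W" "y \<in> W" "z \<in> W" "R' (h x) (h y)" "R' (h y) (h z)"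
    then have "R x y" "R y z" using Rh by auto
    then have "R x z" using fdf(5)[OF F H(1,2,3)] by blast
    then show "R' (h x) (h z)" using Rh H(1,3) by simp
  qed
  have a6: "\<forall>i\<in>W'. \<not> R' i i" unfolding ball
  proof (intro ballI)
    fix x assume "x \<in> W"
    then show "\<not> R' (h x) (h x)" using Rh fdf(6)[OF F] by simp
  qed
  have F': "finite_dynamic_GL_frame W' R' f'"
    unfolding finite_dynamic_GL_frame_def dynamic_frame_def using a1 a2 a3 a4 a5 a6 by blast
  have "h w \<in> W'" unfolding W'_def using w by simp
  moreover have "\<not> sat W' R' f' V' (h w) \<phi>" using S[OF w] ns by simp
  ultimately have "finite_dynamic_GL_frame W' R' f' \<and> h w \<in> W' \<and> \<not> sat W' R' f' V' (h w) \<phi>"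
    using F' by blast
  then show ?thesis by (intro exI[of _ W'] exI[of _ R'] exI[of _ f'] exI[of _ V'] exI[of _ "h w"])
qed

theorem mainTheorem6:
  fixes \<phi> :: "'v fm"
  shows "GLC \<phi> \<longleftrightarrow>
    (\<forall>(W :: nat set) R f. finite_dynamic_GL_frame W R f \<longrightarrow> valid_on W R f \<phi>)"
proof
  assume "GLC \<phi>" then show "\<forall>(W :: nat set) R f. finite_dynamic_GL_frame W R f \<longrightarrow> valid_on W R f \<phi>"
    using soundness[OF \<open>GLC \<phi>\<close>] by blast
next
  assume V: "\<forall>(W :: nat set) R f. finite_dynamic_GL_frame W R f \<longrightarrow> valid_on W R f \<phi>"
  show "GLC \<phi>"
  proof (rule ccontr)
    assume ng: "\<not> GLC \<phi>"
    have "cons {Neg \<phi>}" unfolding cons_def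
    proof (intro allI impI notI)
      fix L assume L: "set L \<subseteq> {Neg \<phi>}" and G: "GLC (Neg (cj L))"
      have "\<forall>x\<in>set L. x = Neg \<phi>" using L by blast
      then have "taut (Imp (Neg (cj L)) \<phi>)" unfolding taut_def by (auto simp: peval_cj)
      then show False using ng G GLC_tautmp by blast
    qed
    from lindenbaum[OF this] obtain G0 where H0: "Neg \<phi> \<in> G0" "mcs G0" by blast
    interpret cm G0 \<phi> using H0(2) by unfold_locales
    have "\<phi> \<notin> G0" using H0 by simp
    then have "(0, [G0]) \<in> WW" "\<not> sat WW RR FF VV (0, [G0]) \<phi>" using countermodel by auto
    from transfer[OF frame this] obtain W' :: "nat set" and R' f' V' w' where
      T: "finite_dynamic_GL_frame W' R' f'" "w' \<in> W'" "\<not> sat W' R' f' V' w' \<phi>"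
      by blast
    have "valid_on W' R' f' \<phi>" using V T(1) by blast
    then show False using T(2,3) unfolding valid_on_def by blast
  qed
qed

end
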